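(* There is an absolute constant $C_2>0$ such that for all $0<u,\tau<1$ the following holds. Let $X,Y$ be finite sets, $Z\subset X\times Y$, and let $\mathsf P_X,\mathsf P_Y$ be partitions of $X$ and $Y$. Let $$E=\Big\{(p_x,p_y)\in\mathsf P_X\times\mathsf P_Y\,:\,\big\|Z-\mathbb P(Z\,:\,p_x\times p_y)\big\|_{\Box^{x,y}(p_x\times p_y)}\ge u\Big\},$$ and suppose $\mathbb P\big(\bigcup_{(p_x,p_y)\in E}p_x\times p_y\,:\,X\times Y\big)\ge\tau$. Then there are partitions $\mathsf P'_X$ of $X$ and $\mathsf P'_Y$ of $Y$ such that (i) $\mathsf P'_X\times\mathsf P'_Y$ refines $\mathsf P_X\times\mathsf P_Y$ and $\mathbb E\big[\mathbb E(Z:\mathsf P'_X\times\mathsf P'_Y)^2\big]\ge\mathbb E\big[\mathbb E(Z:\mathsf P_X\times\mathsf P_Y)^2\big]+\tau u^{C_2}$; (ii) $\operatorname{multi}(\mathsf P'_X:\mathsf P_X)\le 2^{\#\mathsf P_Y}$ and $\operatorname{multi}(\mathsf P'_Y:\mathsf P_Y)\le 2^{\#\mathsf P_X}$.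
   Context: Sets are identified with indicator functions; $X\times Y$ carries the uniform probability measure, and $\mathbb P(Z:p_x\times p_y)=|Z\cap(p_x\times p_y)|/(|p_x||p_y|)$. For finite sets $P,Q$ and $f:P\times Q\to\mathbb R$, $\|f\|_{\Box^{x,y}(P\times Q)}^4=\mathbb E_{x,x'\in P,\,y,y'\in Q}f(x,y)f(x,y')f(x',y)f(x',y')$; here $Z$ is restricted to $p_x\times p_y$. For a partition $\mathsf P$ of $X\times Y$, $\mathbb E(Z:\mathsf P)=\sum_{p\in\mathsf P}\mathbf 1_p\,|Z\cap p|/|p|$, and $\mathsf P'_X\times\mathsf P'_Y=\{a\times b:a\in\mathsf P'_X,b\in\mathsf P'_Y\}$. A partition $\mathsf P'$ refines $\mathsf P$ if every atom of $\mathsf P$ is a union of atoms of $\mathsf P'$. For a partition $\mathsf P'$ subordinate to $\mathsf P$ (every atom of $\mathsf P'$ lies in an atom of $\mathsf P$), $\operatorname{multi}(\mathsf P':\mathsf P)=\max_{p\in\mathsf P}\#\{p'\in\mathsf P':p'\subset p\}$. *)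

theory Defs
  imports Complex_Main "HOL-Library.Disjoint_Sets" "HOL-Library.Indicator_Function"
begin

definition rel_prob :: "('a \<times> 'b) set \<Rightarrow> ('a \<times> 'b) set \<Rightarrow> real" where
  "rel_prob Z A = real (card (Z \<inter> A)) / real (card A)"

definition box_norm :: "'a set \<Rightarrow> 'b set \<Rightarrow> ('a \<Rightarrow> 'b \<Rightarrow> real) \<Rightarrow> real" where
  "box_norm P Q f = root 4
     ((\<Sum>x\<in>P. \<Sum>x'\<in>P. \<Sum>y\<in>Q. \<Sum>y'\<in>Q. f x y * f x y' * f x' y * f x' y')
       / (real (card P) ^ 2 * real (card Q) ^ 2))"

definition prod_part :: "'a set set \<Rightarrow> 'b set set \<Rightarrow> ('a \<times> 'b) set set" where
  "prod_part PX PY = {a \<times> b | a b. a \<in> PX \<and> b \<in> PY}"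

definition cond_exp :: "('a \<times> 'b) set \<Rightarrow> ('a \<times> 'b) set set \<Rightarrow> ('a \<times> 'b) \<Rightarrow> real" where
  "cond_exp Z P z = (\<Sum>p\<in>P. indicator p z * (real (card (Z \<inter> p)) / real (card p)))"

definition uexp :: "'c set \<Rightarrow> ('c \<Rightarrow> real) \<Rightarrow> real" where
  "uexp A f = (\<Sum>z\<in>A. f z) / real (card A)"

definition refines :: "'c set set \<Rightarrow> 'c set set \<Rightarrow> bool" where
  "refines P' P \<longleftrightarrow> (\<forall>p\<in>P. \<exists>S\<subseteq>P'. p = \<Union>S)"

definition multi :: "'c set set \<Rightarrow> 'c set set \<Rightarrow> nat" where
  "multi P' P = Max ((\<lambda>p. card {p'\<in>P'. p' \<subseteq> p}) ` P)"

end

theory Submission imports Defs "HOL-Analysis.Convex" "HOL-Library.FuncSet"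
begin

lemma sum_partition:
  assumes "finite S" "partition_on S P"
  shows "sum g S = (\<Sum>p\<in>P. sum g p)"
proof -
  have S: "S = \<Union>P" using assms(2) partition_onD1 by blast
  have fin: "\<forall>p\<in>P. finite p" using S assms(1) by (metis Union_upper finite_subset)
  have dj: "\<forall>A\<in>P. \<forall>B\<in>P. A \<noteq> B \<longrightarrow> A \<inter> B = {}"
    using partition_onD2[OF assms(2)] by (auto simp: disjoint_def)
  show ?thesis using sum.Union_disjoint[OF fin dj, of g] S by simp
qed

lemma partition_prod:
  assumes "partition_on X PX" "partition_on Y PY"
  shows "partition_on (X \<times> Y) (prod_part PX PY)"
proof (rule partition_onI)
  show "\<Union>(prod_part PX PY) = X \<times> Y"
    using partition_onD1[OF assms(1)] partition_onD1[OF assms(2)]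
    unfolding prod_part_def by blast
  show "{} \<notin> prod_part PX PY"
    using partition_onD3[OF assms(1)] partition_onD3[OF assms(2)]
    unfolding prod_part_def by auto (metis Times_empty)
next
  fix p q assume "p \<in> prod_part PX PY" "q \<in> prod_part PX PY" "p \<noteq> q"
  then obtain a b a' b' where ab: "p = a \<times> b" "q = a' \<times> b'" "a \<in> PX" "b \<in> PY" "a' \<in> PX" "b' \<in> PY"
    unfolding prod_part_def by blast
  with \<open>p \<noteq> q\<close> have "a \<noteq> a' \<or> b \<noteq> b'" by auto
  then have "a \<inter> a' = {} \<or> b \<inter> b' = {}"
    using partition_onD2[OF assms(1)] partition_onD2[OF assms(2)] ab
    by (metis disjointD)
  then show "disjnt p q" using ab by (auto simp: disjnt_def)
qed

lemma cond_exp_eval: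
  assumes "finite P" "disjoint P" "p \<in> P" "z \<in> p"
  shows "cond_exp Z P z = real (card (Z \<inter> p)) / real (card p)"
proof -
  have "cond_exp Z P z = indicator p z * (real (card (Z \<inter> p)) / real (card p))
     + (\<Sum>q\<in>P - {p}. indicator q z * (real (card (Z \<inter> q)) / real (card q)))"
    unfolding cond_exp_def using assms by (simp add: sum.remove)
  moreover have "(\<Sum>q\<in>P - {p}. indicator q z * (real (card (Z \<inter> q)) / real (card q))) = 0"
  proof (rule sum.neutral, rule ballI)
    fix q assume "q \<in> P - {p}"
    then have "q \<inter> p = {}" using disjointD[OF assms(2)] assms(3) by blast
    then have "z \<notin> q" using assms(4) by blast
    then show "indicator q z * (real (card (Z \<inter> q)) / real (card q)) = 0" by simp
  qed
  ultimately show ?thesis using assms by simp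
qed

lemma cell_orth:
  assumes "finite S" "partition_on S P"
    and e: "\<And>p z. p \<in> P \<Longrightarrow> z \<in> p \<Longrightarrow> e z = real (card (Z \<inter> p)) / real (card p)"
    and phi: "\<And>p z z'. p \<in> P \<Longrightarrow> z \<in> p \<Longrightarrow> z' \<in> p \<Longrightarrow> \<phi> z = \<phi> z'"
  shows "(\<Sum>z\<in>S. (indicator Z z - e z) * \<phi> z) = 0"
proof -
  have S: "S = \<Union>P" using assms(2) partition_onD1 by blast
  have "(\<Sum>z\<in>S. (indicator Z z - e z) * \<phi> z) = (\<Sum>p\<in>P. \<Sum>z\<in>p. (indicator Z z - e z) * \<phi> z)"
    by (rule sum_partition[OF assms(1,2)])
  also have "\<dots> = 0"
  proof (rule sum.neutral, rule ballI)
    fix p assume pP: "p \<in> P"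
    then have fp: "finite p" using S assms(1) by (metis Union_upper finite_subset)
    have ne: "p \<noteq> {}" using partition_onD3[OF assms(2)] pP by auto
    then obtain z0 where z0: "z0 \<in> p" by auto
    have cp: "card p > 0" using fp ne by (simp add: card_gt_0_iff)
    have "(\<Sum>z\<in>p. (indicator Z z - e z) * \<phi> z)
        = (\<Sum>z\<in>p. (indicator Z z - real (card (Z \<inter> p)) / real (card p)) * \<phi> z0)"
      using e[OF pP] phi[OF pP _ z0] by (intro sum.cong) auto
    also have "\<dots> = ((\<Sum>z\<in>p. indicator Z z) - real (card p) * (real (card (Z \<inter> p)) / real (card p))) * \<phi> z0"
      by (simp add: sum_distrib_right[symmetric] sum_subtractf)
    also have "(\<Sum>z\<in>p. indicator Z z) = real (card (Z \<inter> p))"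
      using sum.inter_restrict[OF fp, of "\<lambda>_. 1::real" Z] by (simp add: indicator_def of_bool_def Int_commute)
    finally show "(\<Sum>z\<in>p. (indicator Z z - e z) * \<phi> z) = 0" using cp by simp
  qed
  finally show ?thesis .
qed

lemma witness:
  fixes F :: "'a \<Rightarrow> 'b \<Rightarrow> real"
  assumes fa: "finite a" and fb: "finite b" and na: "a \<noteq> {}" and nb: "b \<noteq> {}"
    and u: "0 < u" and bn: "box_norm a b F \<ge> u"
  shows "\<exists>x0\<in>a. \<exists>y0\<in>b. (\<Sum>x\<in>a. \<Sum>y\<in>b. F x y * F x y0 * F x0 y * F x0 y0)
            \<ge> real (card a) * real (card b) * u ^ 4"
proof (rule ccontr)
  define G where "G x x' y y' = F x y * F x y' * F x' y * F x' y'" for x x' y y'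
  define s where "s = (\<Sum>x\<in>a. \<Sum>x'\<in>a. \<Sum>y\<in>b. \<Sum>y'\<in>b. G x x' y y')"
  define N where "N = real (card a) ^ 2 * real (card b) ^ 2"
  have ca: "real (card a) > 0" using fa na by (simp add: card_gt_0_iff)
  have cb: "real (card b) > 0" using fb nb by (simp add: card_gt_0_iff)
  have Npos: "N > 0" unfolding N_def using ca cb by simp
  have "root 4 (s / N) \<ge> root 4 (u ^ 4)"
    using bn u unfolding box_norm_def s_def N_def G_def by (simp add: real_root_power_cancel)
  then have "s / N \<ge> u ^ 4" by simp
  then have sge: "s \<ge> N * u ^ 4" using Npos by (simp add: pos_le_divide_eq mult.commute)
  assume "\<not> ?thesis"
  then have lt: "\<And>x0 y0. x0 \<in> a \<Longrightarrow> y0 \<in> b \<Longrightarrow>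
      (\<Sum>x\<in>a. \<Sum>y\<in>b. G x x0 y y0) < real (card a) * real (card b) * u ^ 4"
    unfolding G_def by (auto simp: not_le)
  have "s = (\<Sum>x'\<in>a. \<Sum>x\<in>a. \<Sum>y\<in>b. \<Sum>y'\<in>b. G x x' y y')"
    unfolding s_def by (rule sum.swap)
  also have "\<dots> = (\<Sum>x'\<in>a. \<Sum>x\<in>a. \<Sum>y'\<in>b. \<Sum>y\<in>b. G x x' y y')"
    by (intro sum.cong refl sum.swap)
  also have "\<dots> = (\<Sum>x'\<in>a. \<Sum>y'\<in>b. \<Sum>x\<in>a. \<Sum>y\<in>b. G x x' y y')"
    by (intro sum.cong refl sum.swap)
  also have "\<dots> < (\<Sum>x'\<in>a. \<Sum>y'\<in>b. real (card a) * real (card b) * u ^ 4)"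
    using fa fb na nb lt by (intro sum_strict_mono) (auto intro!: sum_strict_mono)
  also have "\<dots> = N * u ^ 4" unfolding N_def by (simp add: power2_eq_square)
  finally show False using sge by simp
qed

definition fibers :: "'a set set \<Rightarrow> ('a set \<Rightarrow> 'a \<Rightarrow> 'c) \<Rightarrow> 'a set set" where
  "fibers P s = {{x'\<in>a. s a x' = s a x} | a x. a \<in> P \<and> x \<in> a}"

lemma fibers_part:
  assumes "partition_on X P"
  shows "partition_on X (fibers P s)"
proof (rule partition_onI)
  show "\<Union>(fibers P s) = X"
    using partition_onD1[OF assms] unfolding fibers_def by blast
  show "{} \<notin> fibers P s" unfolding fibers_def by auto
next
  fix p q assume "p \<in> fibers P s" "q \<in> fibers P s" "p \<noteq> q"
  then obtain a x a' x' where pq: "p = {z\<in>a. s a z = s a x}" "q = {z\<in>a'. s a' z = s a' x'}"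
    "a \<in> P" "a' \<in> P" "x \<in> a" "x' \<in> a'"
    unfolding fibers_def by blast
  show "disjnt p q"
  proof (rule ccontr)
    assume "\<not> disjnt p q"
    then obtain z where z: "z \<in> p" "z \<in> q" by (auto simp: disjnt_def)
    have za: "z \<in> a" "z \<in> a'" using z pq by auto
    have "a = a'"
    proof (rule ccontr)
      assume "a \<noteq> a'"
      then have "a \<inter> a' = {}" using disjointD[OF partition_onD2[OF assms] pq(3) pq(4)] by blast
      then show False using za by blast
    qed
    then show False using z pq \<open>p \<noteq> q\<close> by auto
  qed
qed

lemma fibers_same:
  assumes "partition_on X P" "q \<in> fibers P s" "x1 \<in> q" "x2 \<in> q" "a \<in> P"
  shows "(x1 \<in> a \<longleftrightarrow> x2 \<in> a) \<and> (x1 \<in> a \<longrightarrow> s a x1 = s a x2)"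
proof -
  obtain a0 x where q: "q = {z\<in>a0. s a0 z = s a0 x}" "a0 \<in> P" "x \<in> a0"
    using assms(2) unfolding fibers_def by blast
  have x12: "x1 \<in> a0" "x2 \<in> a0" "s a0 x1 = s a0 x2" using q assms(3,4) by auto
  show ?thesis
  proof (cases "a = a0")
    case True then show ?thesis using x12 by auto
  next
    case False
    then have "a \<inter> a0 = {}" using disjointD[OF partition_onD2[OF assms(1)] assms(5) q(2)] by blast
    then show ?thesis using x12 by auto
  qed
qed

lemma fibers_sub:
  assumes "q \<in> fibers P s"
  shows "\<exists>a\<in>P. q \<subseteq> a"
  using assms unfolding fibers_def by auto

lemma fibers_self:
  assumes "a \<in> P" "x \<in> a"
  shows "{x'\<in>a. s a x' = s a x} \<in> fibers P s" "x \<in> {x'\<in>a. s a x' = s a x}"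
  using assms unfolding fibers_def by auto

lemma fibers_count:
  assumes "partition_on X P" "p \<in> P" "\<And>a x. s a x \<in> S" "finite S"
  shows "card {q\<in>fibers P s. q \<subseteq> p} \<le> card S"
proof -
  have "{q\<in>fibers P s. q \<subseteq> p} \<subseteq> (\<lambda>t. {x'\<in>p. s p x' = t}) ` S"
  proof
    fix q assume "q \<in> {q\<in>fibers P s. q \<subseteq> p}"
    then obtain a x where q: "q = {z\<in>a. s a z = s a x}" "a \<in> P" "x \<in> a" "q \<subseteq> p"
      unfolding fibers_def by blast
    then have "x \<in> p" by auto
    have "a = p"
    proof (rule ccontr)
      assume "a \<noteq> p"
      then have "a \<inter> p = {}" using disjointD[OF partition_onD2[OF assms(1)] q(2) assms(2)] by blast
      then show False using q(3) \<open>x \<in> p\<close> by blast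
    qed
    then show "q \<in> (\<lambda>t. {x'\<in>p. s p x' = t}) ` S" using q assms(3) by auto
  qed
  then have "card {q\<in>fibers P s. q \<subseteq> p} \<le> card ((\<lambda>t. {x'\<in>p. s p x' = t}) ` S)"
    using assms(4) by (intro card_mono) auto
  also have "\<dots> \<le> card S" by (rule card_image_le[OF assms(4)])
  finally show ?thesis .
qed

lemma sum_blocks:
  assumes "finite X" "finite Y" "partition_on X PX" "partition_on Y PY"
  shows "(\<Sum>z\<in>X\<times>Y. g z) = (\<Sum>a\<in>PX. \<Sum>b\<in>PY. \<Sum>z\<in>a\<times>b. g z)"
proof -
  have "(\<Sum>z\<in>X\<times>Y. g z) = (\<Sum>x\<in>X. \<Sum>y\<in>Y. g (x,y))"
    by (simp add: sum.cartesian_product)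
  also have "\<dots> = (\<Sum>a\<in>PX. \<Sum>x\<in>a. \<Sum>y\<in>Y. g (x,y))"
    by (rule sum_partition[OF assms(1,3)])
  also have "\<dots> = (\<Sum>a\<in>PX. \<Sum>x\<in>a. \<Sum>b\<in>PY. \<Sum>y\<in>b. g (x,y))"
    by (intro sum.cong refl sum_partition[OF assms(2,4)])
  also have "\<dots> = (\<Sum>a\<in>PX. \<Sum>b\<in>PY. \<Sum>x\<in>a. \<Sum>y\<in>b. g (x,y))"
    by (intro sum.cong refl sum.swap)
  also have "\<dots> = (\<Sum>a\<in>PX. \<Sum>b\<in>PY. \<Sum>z\<in>a\<times>b. g z)"
    by (simp add: sum.cartesian_product)
  finally show ?thesis .
qed

lemma main_lemma:
  fixes X :: "'a set" and Y :: "'b set" and Z :: "('a \<times> 'b) set" and PX PY and u \<tau> :: real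
  assumes u: "0 < u" and tau: "0 < \<tau>" and fX: "finite X" and fY: "finite Y" and Zs: "Z \<subseteq> X \<times> Y"
    and pX: "partition_on X PX" and pY: "partition_on Y PY"
    and hyp: "rel_prob (\<Union>{px \<times> py | px py. px \<in> PX \<and> py \<in> PY \<and>
                   box_norm px py (\<lambda>x y. indicator Z (x, y) - rel_prob Z (px \<times> py)) \<ge> u})
                (X \<times> Y) \<ge> \<tau>"
  shows "\<exists>PX' PY'. partition_on X PX' \<and> partition_on Y PY' \<and>
          refines (prod_part PX' PY') (prod_part PX PY) \<and>
          uexp (X \<times> Y) (\<lambda>z. (cond_exp Z (prod_part PX' PY') z)\<^sup>2)
            \<ge> uexp (X \<times> Y) (\<lambda>z. (cond_exp Z (prod_part PX PY) z)\<^sup>2) + \<tau> * u ^ 8 \<and>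
          multi PX' PX \<le> 2 ^ card PY \<and> multi PY' PY \<le> 2 ^ card PX"
proof -
  define F where "F = (\<lambda>a b x y. indicator Z (x, y) - rel_prob Z (a \<times> b))"
  define Ep where "Ep = {(a, b) \<in> PX \<times> PY. box_norm a b (F a b) \<ge> u}"
  define U where "U = \<Union>{px \<times> py | px py. px \<in> PX \<and> py \<in> PY \<and>
                   box_norm px py (\<lambda>x y. indicator Z (x, y) - rel_prob Z (px \<times> py)) \<ge> u}"
  have U_eq: "U = (\<Union>ab\<in>Ep. fst ab \<times> snd ab)"
  proof
    show "U \<subseteq> (\<Union>ab\<in>Ep. fst ab \<times> snd ab)"
    proof
      fix z assume "z \<in> U"
      then obtain px py where "z \<in> px \<times> py" "px \<in> PX" "py \<in> PY"
        "box_norm px py (\<lambda>x y. indicator Z (x, y) - rel_prob Z (px \<times> py)) \<ge> u"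
        unfolding U_def by blast
      then show "z \<in> (\<Union>ab\<in>Ep. fst ab \<times> snd ab)" unfolding Ep_def F_def
        by (intro UN_I[of "(px, py)"]) auto
    qed
    show "(\<Union>ab\<in>Ep. fst ab \<times> snd ab) \<subseteq> U"
    proof
      fix z assume "z \<in> (\<Union>ab\<in>Ep. fst ab \<times> snd ab)"
      then obtain px py where "z \<in> px \<times> py" "px \<in> PX" "py \<in> PY"
        "box_norm px py (\<lambda>x y. indicator Z (x, y) - rel_prob Z (px \<times> py)) \<ge> u"
        unfolding Ep_def F_def by auto
      then show "z \<in> U" unfolding U_def by blast
    qed
  qed
  have fXY: "finite (X \<times> Y)" using fX fY by simp
  have Npos: "card (X \<times> Y) > 0"
  proof (rule ccontr)
    assume "\<not> ?thesis"
    then have "card (X \<times> Y) = 0" by simp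
    then have "rel_prob U (X \<times> Y) = 0" unfolding rel_prob_def by simp
    then show False using hyp tau unfolding U_def by simp
  qed
  then have XYne: "X \<noteq> {}" "Y \<noteq> {}" by auto
  have fPX: "finite PX" using finite_elements[OF fX pX] .
  have fPY: "finite PY" using finite_elements[OF fY pY] .
  have PXne: "PX \<noteq> {}" using partition_onD1[OF pX] XYne by auto
  have PYne: "PY \<noteq> {}" using partition_onD1[OF pY] XYne by auto
  have finPX: "\<And>a. a \<in> PX \<Longrightarrow> finite a \<and> a \<noteq> {} \<and> a \<subseteq> X"
    using partition_onD1[OF pX] partition_onD3[OF pX] fX by (auto intro: finite_subset)
  have finPY: "\<And>b. b \<in> PY \<Longrightarrow> finite b \<and> b \<noteq> {} \<and> b \<subseteq> Y"
    using partition_onD1[OF pY] partition_onD3[OF pY] fY by (auto intro: finite_subset)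
  have "\<forall>ab\<in>PX \<times> PY. \<exists>w. fst w \<in> fst ab \<and> snd w \<in> snd ab \<and>
     (ab \<in> Ep \<longrightarrow> (\<Sum>x\<in>fst ab. \<Sum>y\<in>snd ab. F (fst ab) (snd ab) x y * F (fst ab) (snd ab) x (snd w)
        * F (fst ab) (snd ab) (fst w) y * F (fst ab) (snd ab) (fst w) (snd w))
        \<ge> real (card (fst ab)) * real (card (snd ab)) * u ^ 4)"
  proof
    fix ab assume ab: "ab \<in> PX \<times> PY"
    then obtain a b where abd: "ab = (a, b)" "a \<in> PX" "b \<in> PY" by auto
    show "\<exists>w. fst w \<in> fst ab \<and> snd w \<in> snd ab \<and>
     (ab \<in> Ep \<longrightarrow> (\<Sum>x\<in>fst ab. \<Sum>y\<in>snd ab. F (fst ab) (snd ab) x y * F (fst ab) (snd ab) x (snd w)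
        * F (fst ab) (snd ab) (fst w) y * F (fst ab) (snd ab) (fst w) (snd w))
        \<ge> real (card (fst ab)) * real (card (snd ab)) * u ^ 4)"
    proof (cases "ab \<in> Ep")
      case True
      then have "box_norm a b (F a b) \<ge> u" unfolding Ep_def abd by simp
      then obtain x0 y0 where "x0 \<in> a" "y0 \<in> b"
        "(\<Sum>x\<in>a. \<Sum>y\<in>b. F a b x y * F a b x y0 * F a b x0 y * F a b x0 y0)
            \<ge> real (card a) * real (card b) * u ^ 4"
        using witness[of a b u "F a b"] finPX[OF abd(2)] finPY[OF abd(3)] u by blast
      then show ?thesis using abd by (intro exI[of _ "(x0, y0)"]) auto
    next
      case False
      obtain x0 y0 where "x0 \<in> a" "y0 \<in> b" using finPX[OF abd(2)] finPY[OF abd(3)] by blast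
      then show ?thesis using abd False by (intro exI[of _ "(x0, y0)"]) auto
    qed
  qed
  then obtain w where w: "\<forall>ab\<in>PX \<times> PY. fst (w ab) \<in> fst ab \<and> snd (w ab) \<in> snd ab \<and>
     (ab \<in> Ep \<longrightarrow> (\<Sum>x\<in>fst ab. \<Sum>y\<in>snd ab. F (fst ab) (snd ab) x y * F (fst ab) (snd ab) x (snd (w ab))
        * F (fst ab) (snd ab) (fst (w ab)) y * F (fst ab) (snd ab) (fst (w ab)) (snd (w ab)))
        \<ge> real (card (fst ab)) * real (card (snd ab)) * u ^ 4)"
    by (rule bchoice[elim_format]) blast
  define wx where "wx a b = fst (w (a, b))" for a b
  define wy where "wy a b = snd (w (a, b))" for a b
  have W: "wx a b \<in> a \<and> wy a b \<in> b \<and> ((a, b) \<in> Ep \<longrightarrow>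
      (\<Sum>x\<in>a. \<Sum>y\<in>b. F a b x y * F a b x (wy a b) * F a b (wx a b) y * F a b (wx a b) (wy a b))
        \<ge> real (card a) * real (card b) * u ^ 4)" if "a \<in> PX" "b \<in> PY" for a b
    using w that unfolding wx_def wy_def by auto
  define sx where "sx = (\<lambda>a x. restrict (\<lambda>b. (x, wy a b) \<in> Z) PY)"
  define sy where "sy = (\<lambda>b y. restrict (\<lambda>a. (wx a b, y) \<in> Z) PX)"
  define PX' where "PX' = fibers PX sx"
  define PY' where "PY' = fibers PY sy"
  have pX': "partition_on X PX'" unfolding PX'_def by (rule fibers_part[OF pX])
  have pY': "partition_on Y PY'" unfolding PY'_def by (rule fibers_part[OF pY])
  have m1: "multi PX' PX \<le> 2 ^ card PY"
    unfolding multi_def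
  proof (rule Max.boundedI)
    show "finite ((\<lambda>p. card {p' \<in> PX'. p' \<subseteq> p}) ` PX)" using fPX by simp
    show "(\<lambda>p. card {p' \<in> PX'. p' \<subseteq> p}) ` PX \<noteq> {}" using PXne by simp
  next
    fix m assume "m \<in> (\<lambda>p. card {p' \<in> PX'. p' \<subseteq> p}) ` PX"
    then obtain p where p: "p \<in> PX" "m = card {p' \<in> PX'. p' \<subseteq> p}" by auto
    have "m \<le> card (PY \<rightarrow>\<^sub>E (UNIV :: bool set))"
      unfolding p(2) PX'_def
      by (rule fibers_count[OF pX p(1)]) (auto simp: sx_def fPY finite_PiE)
    also have "\<dots> = 2 ^ card PY" using fPY by (simp add: card_PiE)
    finally show "m \<le> 2 ^ card PY" .
  qed
  have m2: "multi PY' PY \<le> 2 ^ card PX"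
    unfolding multi_def
  proof (rule Max.boundedI)
    show "finite ((\<lambda>p. card {p' \<in> PY'. p' \<subseteq> p}) ` PY)" using fPY by simp
    show "(\<lambda>p. card {p' \<in> PY'. p' \<subseteq> p}) ` PY \<noteq> {}" using PYne by simp
  next
    fix m assume "m \<in> (\<lambda>p. card {p' \<in> PY'. p' \<subseteq> p}) ` PY"
    then obtain p where p: "p \<in> PY" "m = card {p' \<in> PY'. p' \<subseteq> p}" by auto
    have "m \<le> card (PX \<rightarrow>\<^sub>E (UNIV :: bool set))"
      unfolding p(2) PY'_def
      by (rule fibers_count[OF pY p(1)]) (auto simp: sy_def fPX finite_PiE)
    also have "\<dots> = 2 ^ card PX" using fPX by (simp add: card_PiE)
    finally show "m \<le> 2 ^ card PX" .
  qed
  have ref: "refines (prod_part PX' PY') (prod_part PX PY)"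
    unfolding refines_def
  proof
    fix p assume "p \<in> prod_part PX PY"
    then obtain a b where ab: "p = a \<times> b" "a \<in> PX" "b \<in> PY" unfolding prod_part_def by auto
    let ?S = "{c \<in> prod_part PX' PY'. c \<subseteq> p}"
    have "p \<subseteq> \<Union>?S"
    proof
      fix z assume "z \<in> p"
      then obtain x y where z: "z = (x, y)" "x \<in> a" "y \<in> b" using ab by auto
      let ?qx = "{x'\<in>a. sx a x' = sx a x}" and ?qy = "{y'\<in>b. sy b y' = sy b y}"
      have "?qx \<in> PX'" unfolding PX'_def by (rule fibers_self(1)[OF ab(2) z(2)])
      moreover have "?qy \<in> PY'" unfolding PY'_def by (rule fibers_self(1)[OF ab(3) z(3)])
      ultimately have "?qx \<times> ?qy \<in> ?S" using ab unfolding prod_part_def by auto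
      moreover have "z \<in> ?qx \<times> ?qy" using z by auto
      ultimately show "z \<in> \<Union>?S" by blast
    qed
    then show "\<exists>S\<subseteq>prod_part PX' PY'. p = \<Union>S"
      by (intro exI[of _ ?S]) auto
  qed
  define Cf where "Cf = prod_part PX' PY'"
  define Cc where "Cc = prod_part PX PY"
  have pCf: "partition_on (X \<times> Y) Cf" unfolding Cf_def by (rule partition_prod[OF pX' pY'])
  have pCc: "partition_on (X \<times> Y) Cc" unfolding Cc_def by (rule partition_prod[OF pX pY])
  have fCf: "finite Cf" by (rule finite_elements[OF fXY pCf])
  have fCc: "finite Cc" by (rule finite_elements[OF fXY pCc])
  define e where "e = cond_exp Z Cc"
  define e' where "e' = cond_exp Z Cf"
  have e'_eval: "\<And>c z. c \<in> Cf \<Longrightarrow> z \<in> c \<Longrightarrow> e' z = real (card (Z \<inter> c)) / real (card c)"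
    unfolding e'_def using cond_exp_eval[OF fCf partition_onD2[OF pCf]] by blast
  have e_eval: "\<And>c z. c \<in> Cc \<Longrightarrow> z \<in> c \<Longrightarrow> e z = real (card (Z \<inter> c)) / real (card c)"
    unfolding e_def using cond_exp_eval[OF fCc partition_onD2[OF pCc]] by blast
  have e_block: "\<And>a b z. a \<in> PX \<Longrightarrow> b \<in> PY \<Longrightarrow> z \<in> a \<times> b \<Longrightarrow> e z = rel_prob Z (a \<times> b)"
    using e_eval unfolding rel_prob_def Cc_def prod_part_def by blast
  have Cf_sub: "\<And>c. c \<in> Cf \<Longrightarrow> \<exists>R\<in>Cc. c \<subseteq> R"
  proof -
    fix c assume "c \<in> Cf"
    then obtain qx qy where q: "c = qx \<times> qy" "qx \<in> PX'" "qy \<in> PY'" unfolding Cf_def prod_part_def by auto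
    obtain a b where "a \<in> PX" "qx \<subseteq> a" "b \<in> PY" "qy \<subseteq> b"
      using fibers_sub q(2,3) unfolding PX'_def PY'_def by metis
    then show "\<exists>R\<in>Cc. c \<subseteq> R" using q unfolding Cc_def prod_part_def by blast
  qed
  have e_const: "\<And>c z z'. c \<in> Cf \<Longrightarrow> z \<in> c \<Longrightarrow> z' \<in> c \<Longrightarrow> e z = e z'"
  proof -
    fix c z z' assume "c \<in> Cf" "z \<in> c" "z' \<in> c"
    then obtain R where "R \<in> Cc" "c \<subseteq> R" using Cf_sub by blast
    then show "e z = e z'" using e_eval \<open>z \<in> c\<close> \<open>z' \<in> c\<close> by (metis subsetD)
  qed
  have E1: "(\<Sum>z\<in>X \<times> Y. (indicator Z z - e' z) * e z) = 0"
    by (rule cell_orth[OF fXY pCf e'_eval e_const])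
  have E2: "(\<Sum>z\<in>X \<times> Y. (indicator Z z - e z) * e z) = 0"
  proof (rule cell_orth[OF fXY pCc e_eval])
    fix p z z' assume "p \<in> Cc" "z \<in> p" "z' \<in> p"
    then show "e z = e z'" using e_eval[of p z] e_eval[of p z'] by simp
  qed
  have energy: "(\<Sum>z\<in>X \<times> Y. (e' z)\<^sup>2) = (\<Sum>z\<in>X \<times> Y. (e z)\<^sup>2) + (\<Sum>z\<in>X \<times> Y. (e' z - e z)\<^sup>2)"
  proof -
    have "(\<Sum>z\<in>X \<times> Y. (e' z - e z)\<^sup>2) = (\<Sum>z\<in>X \<times> Y. (e' z)\<^sup>2 - (e z)\<^sup>2
        - 2 * ((indicator Z z - e z) * e z) + 2 * ((indicator Z z - e' z) * e z))"
      by (intro sum.cong refl) (simp add: power2_eq_square algebra_simps)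
    also have "\<dots> = (\<Sum>z\<in>X \<times> Y. (e' z)\<^sup>2) - (\<Sum>z\<in>X \<times> Y. (e z)\<^sup>2)
        - 2 * (\<Sum>z\<in>X \<times> Y. (indicator Z z - e z) * e z) + 2 * (\<Sum>z\<in>X \<times> Y. (indicator Z z - e' z) * e z)"
      by (simp add: sum.distrib sum_subtractf sum_distrib_left)
    finally show ?thesis using E1 E2 by simp
  qed
  have sub_XY: "\<And>a b. a \<in> PX \<Longrightarrow> b \<in> PY \<Longrightarrow> a \<times> b \<subseteq> X \<times> Y"
    using finPX finPY by blast
  have Fb: "\<bar>F a b x y\<bar> \<le> 1" if "a \<in> PX" "b \<in> PY" for a b x y
  proof -
    have fab: "finite (a \<times> b)" using finPX[OF that(1)] finPY[OF that(2)] by simp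
    have "card (Z \<inter> (a \<times> b)) \<le> card (a \<times> b)" using fab by (intro card_mono) auto
    then have d01: "0 \<le> rel_prob Z (a \<times> b)" "rel_prob Z (a \<times> b) \<le> 1"
      unfolding rel_prob_def by (auto simp: divide_le_eq_1)
    then show ?thesis unfolding F_def by (auto simp: indicator_def)
  qed
  have block: "(\<Sum>z\<in>a \<times> b. (e' z - e z)\<^sup>2) \<ge> real (card a) * real (card b) * u ^ 8"
    if ab: "a \<in> PX" "b \<in> PY" "(a, b) \<in> Ep" for a b
  proof -
    define x0 where "x0 = wx a b"
    define y0 where "y0 = wy a b"
    define T where "T = (\<Sum>x\<in>a. \<Sum>y\<in>b. F a b x y * F a b x y0 * F a b x0 y * F a b x0 y0)"
    have Tge: "T \<ge> real (card a) * real (card b) * u ^ 4"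
      using W[OF ab(1,2)] ab(3) unfolding T_def x0_def y0_def by blast
    define \<phi> where "\<phi> = (\<lambda>(x, y). (indicator a x * F a b x y0) * (indicator b y * F a b x0 y) * F a b x0 y0)"
    define \<phi>0 where "\<phi>0 = (\<lambda>(x, y). F a b x y0 * F a b x0 y * F a b x0 y0)"
    have fa: "finite a" "a \<noteq> {}" using finPX[OF ab(1)] by auto
    have fb: "finite b" "b \<noteq> {}" using finPY[OF ab(2)] by auto
    have \<phi>_const: "\<phi> z = \<phi> z'" if c: "c \<in> Cf" "z \<in> c" "z' \<in> c" for c z z'
    proof -
      obtain qx qy where q: "c = qx \<times> qy" "qx \<in> PX'" "qy \<in> PY'" using c(1) unfolding Cf_def prod_part_def by auto
      obtain x1 y1 x2 y2 where zz: "z = (x1, y1)" "z' = (x2, y2)" "x1 \<in> qx" "x2 \<in> qx" "y1 \<in> qy" "y2 \<in> qy"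
        using c q by auto
      have hx: "(x1 \<in> a \<longleftrightarrow> x2 \<in> a) \<and> (x1 \<in> a \<longrightarrow> sx a x1 = sx a x2)"
        using fibers_same[OF pX q(2)[unfolded PX'_def] zz(3,4) ab(1)] .
      have hy: "(y1 \<in> b \<longleftrightarrow> y2 \<in> b) \<and> (y1 \<in> b \<longrightarrow> sy b y1 = sy b y2)"
        using fibers_same[OF pY q(3)[unfolded PY'_def] zz(5,6) ab(2)] .
      have gx: "indicator a x1 * F a b x1 y0 = indicator a x2 * F a b x2 y0"
      proof (cases "x1 \<in> a")
        case True
        then have "sx a x1 b = sx a x2 b" using hx by simp
        then have "((x1, y0) \<in> Z) = ((x2, y0) \<in> Z)" using ab(2) unfolding sx_def y0_def by simp
        then show ?thesis using True hx unfolding F_def by (simp add: indicator_def)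
      next
        case False then show ?thesis using hx by simp
      qed
      have gy: "indicator b y1 * F a b x0 y1 = indicator b y2 * F a b x0 y2"
      proof (cases "y1 \<in> b")
        case True
        then have "sy b y1 a = sy b y2 a" using hy by simp
        then have "((x0, y1) \<in> Z) = ((x0, y2) \<in> Z)" using ab(1) unfolding sy_def x0_def by simp
        then show ?thesis using True hy unfolding F_def by (simp add: indicator_def)
      next
        case False then show ?thesis using hy by simp
      qed
      show ?thesis unfolding \<phi>_def zz(1,2) using gx gy by simp
    qed
    have O1: "(\<Sum>z\<in>X \<times> Y. (indicator Z z - e' z) * \<phi> z) = 0"
      by (rule cell_orth[OF fXY pCf e'_eval \<phi>_const])
    have red: "(\<Sum>z\<in>X \<times> Y. g z * \<phi> z) = (\<Sum>z\<in>a \<times> b. g z * \<phi>0 z)" for g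
      by (rule sum.mono_neutral_cong_right[OF fXY sub_XY[OF ab(1,2)]])
         (auto simp: \<phi>_def \<phi>0_def indicator_def)
    have O2: "(\<Sum>z\<in>a \<times> b. (indicator Z z - e z) * \<phi>0 z) = T"
    proof -
      have "(\<Sum>z\<in>a \<times> b. (indicator Z z - e z) * \<phi>0 z) = (\<Sum>z\<in>a \<times> b. (\<lambda>(x,y). F a b x y * F a b x y0 * F a b x0 y * F a b x0 y0) z)"
        using e_block[OF ab(1,2)] by (intro sum.cong refl) (auto simp: \<phi>0_def F_def)
      also have "\<dots> = T" unfolding T_def by (simp add: sum.cartesian_product)
      finally show ?thesis .
    qed
    have key: "(\<Sum>z\<in>a \<times> b. (e' z - e z) * \<phi>0 z) = T"
    proof -
      have "(\<Sum>z\<in>a \<times> b. (e' z - e z) * \<phi>0 z) = (\<Sum>z\<in>a \<times> b. (indicator Z z - e z) * \<phi>0 z) - (\<Sum>z\<in>a \<times> b. (indicator Z z - e' z) * \<phi>0 z)"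
        unfolding sum_subtractf[symmetric] by (intro sum.cong refl) (simp add: algebra_simps)
      also have "(\<Sum>z\<in>a \<times> b. (indicator Z z - e' z) * \<phi>0 z) = 0" using O1 red by simp
      finally show ?thesis using O2 by simp
    qed
    have \<phi>0b: "(\<phi>0 z)\<^sup>2 \<le> 1" for z
    proof -
      obtain x y where z: "z = (x, y)" by fastforce
      have "\<bar>\<phi>0 z\<bar> \<le> 1" unfolding z \<phi>0_def using Fb[OF ab(1,2)]
        by (simp add: abs_mult mult_le_one)
      then show ?thesis using power_le_one[OF abs_ge_zero, of "\<phi>0 z" 2] by simp
    qed
    have cs: "T\<^sup>2 \<le> (\<Sum>z\<in>a \<times> b. (e' z - e z)\<^sup>2) * (\<Sum>z\<in>a \<times> b. (\<phi>0 z)\<^sup>2)"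
      using Cauchy_Schwarz_ineq_sum[of "\<lambda>z. e' z - e z" \<phi>0 "a \<times> b"] key by simp
    have s\<phi>: "(\<Sum>z\<in>a \<times> b. (\<phi>0 z)\<^sup>2) \<le> real (card a) * real (card b)"
    proof -
      have "(\<Sum>z\<in>a \<times> b. (\<phi>0 z)\<^sup>2) \<le> (\<Sum>z\<in>a \<times> b. 1)" by (intro sum_mono \<phi>0b)
      then show ?thesis by (simp add: card_cartesian_product)
    qed
    define Q where "Q = (\<Sum>z\<in>a \<times> b. (e' z - e z)\<^sup>2)"
    define n where "n = real (card a) * real (card b)"
    have npos: "n > 0" unfolding n_def using fa fb by (simp add: card_gt_0_iff)
    have Q0: "Q \<ge> 0" unfolding Q_def by (simp add: sum_nonneg)
    have Tn: "T \<ge> n * u ^ 4" using Tge unfolding n_def .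
    have p1: "(n * u ^ 4)\<^sup>2 \<le> T\<^sup>2" using Tn u npos by (intro power_mono) auto
    have c1: "T\<^sup>2 \<le> Q * (\<Sum>z\<in>a \<times> b. (\<phi>0 z)\<^sup>2)" using cs unfolding Q_def .
    have c2: "Q * (\<Sum>z\<in>a \<times> b. (\<phi>0 z)\<^sup>2) \<le> Q * n" using s\<phi> Q0 unfolding n_def by (rule mult_left_mono)
    have p2: "(n * u ^ 4)\<^sup>2 = n * (n * u ^ 8)" by algebra
    have "n * (n * u ^ 8) \<le> n * Q" using p1 p2 c1 c2 by (simp add: mult.commute)
    then have "n * u ^ 8 \<le> Q" using npos by simp
    then show ?thesis unfolding Q_def n_def .
  qed
  have total: "(\<Sum>z\<in>X \<times> Y. (e' z - e z)\<^sup>2) \<ge> \<tau> * real (card (X \<times> Y)) * u ^ 8"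
  proof -
    have f0: "(\<Sum>z\<in>X \<times> Y. (e' z - e z)\<^sup>2) = (\<Sum>a\<in>PX. \<Sum>b\<in>PY. \<Sum>z\<in>a \<times> b. (e' z - e z)\<^sup>2)"
      by (rule sum_blocks[OF fX fY pX pY])
    have f1: "(\<Sum>a\<in>PX. \<Sum>b\<in>PY. \<Sum>z\<in>a \<times> b. (e' z - e z)\<^sup>2) \<ge> (\<Sum>a\<in>PX. \<Sum>b\<in>PY. if (a, b) \<in> Ep then real (card a) * real (card b) * u ^ 8 else 0)"
      using block by (intro sum_mono) (auto simp: sum_nonneg)
    have f2: "(\<Sum>a\<in>PX. \<Sum>b\<in>PY. if (a, b) \<in> Ep then real (card a) * real (card b) * u ^ 8 else 0)
        = (\<Sum>ab\<in>PX \<times> PY. if ab \<in> Ep then real (card (fst ab \<times> snd ab)) * u ^ 8 else 0)"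
      by (simp add: sum.cartesian_product case_prod_beta) (intro sum.cong refl, simp add: card_cartesian_product)
    also have "\<dots> = (\<Sum>ab\<in>Ep. real (card (fst ab \<times> snd ab)) * u ^ 8)"
      by (rule sum.mono_neutral_cong_right) (auto simp: fPX fPY Ep_def)
    also have "\<dots> = real (\<Sum>ab\<in>Ep. card (fst ab \<times> snd ab)) * u ^ 8"
      by (simp add: sum_distrib_right)
    finally have f3: "(\<Sum>a\<in>PX. \<Sum>b\<in>PY. if (a, b) \<in> Ep then real (card a) * real (card b) * u ^ 8 else 0) = real (\<Sum>ab\<in>Ep. card (fst ab \<times> snd ab)) * u ^ 8" .
    have f4: "card U \<le> (\<Sum>ab\<in>Ep. card (fst ab \<times> snd ab))"
      unfolding U_eq by (rule card_UN_le, rule finite_subset[of _ "PX \<times> PY"]) (auto simp: Ep_def fPX fPY)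
    have f5: "\<tau> * real (card (X \<times> Y)) \<le> real (card U)"
    proof -
      have "\<tau> \<le> real (card (U \<inter> (X \<times> Y))) / real (card (X \<times> Y))"
        using hyp[folded U_def] unfolding rel_prob_def[of U] .
      then have "\<tau> * real (card (X \<times> Y)) \<le> real (card (U \<inter> (X \<times> Y)))"
        using Npos by (simp add: le_divide_eq)
      also have "card (U \<inter> (X \<times> Y)) \<le> card U"
      proof -
        have "U \<subseteq> X \<times> Y" unfolding U_eq using finPX finPY by (fastforce simp: Ep_def)
        then have "finite U" using fXY by (rule finite_subset)
        then show ?thesis by (intro card_mono) auto
      qed
      finally show ?thesis by simp
    qed
    have "\<tau> * real (card (X \<times> Y)) \<le> real (\<Sum>ab\<in>Ep. card (fst ab \<times> snd ab))"
      using f5 f4[THEN of_nat_mono[where 'a=real]] by linarith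
    then have "\<tau> * real (card (X \<times> Y)) * u ^ 8 \<le> real (\<Sum>ab\<in>Ep. card (fst ab \<times> snd ab)) * u ^ 8"
      using u by (intro mult_right_mono) auto
    then show ?thesis using f0 f1 f3 by linarith
  qed
  have final: "uexp (X \<times> Y) (\<lambda>z. (e' z)\<^sup>2) \<ge> uexp (X \<times> Y) (\<lambda>z. (e z)\<^sup>2) + \<tau> * u ^ 8"
  proof -
    have "(\<Sum>z\<in>X \<times> Y. (e' z)\<^sup>2) \<ge> (\<Sum>z\<in>X \<times> Y. (e z)\<^sup>2) + \<tau> * u ^ 8 * real (card (X \<times> Y))"
      using energy total by (simp add: algebra_simps)
    then have le: "(\<Sum>z\<in>X \<times> Y. (e z)\<^sup>2) + \<tau> * u ^ 8 * real (card (X \<times> Y)) \<le> (\<Sum>z\<in>X \<times> Y. (e' z)\<^sup>2)" .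
    have N: "real (card (X \<times> Y)) > 0" using Npos by simp
    have "uexp (X \<times> Y) (\<lambda>z. (e z)\<^sup>2) + \<tau> * u ^ 8
        = ((\<Sum>z\<in>X \<times> Y. (e z)\<^sup>2) + \<tau> * u ^ 8 * real (card (X \<times> Y))) / real (card (X \<times> Y))"
      unfolding uexp_def using N by (simp add: field_simps)
    also have "\<dots> \<le> (\<Sum>z\<in>X \<times> Y. (e' z)\<^sup>2) / real (card (X \<times> Y))"
      using le N by (intro divide_right_mono) auto
    also have "\<dots> = uexp (X \<times> Y) (\<lambda>z. (e' z)\<^sup>2)" unfolding uexp_def ..
    finally show ?thesis .
  qed
  show ?thesis
    by (intro exI[of _ PX'] exI[of _ PY'] conjI pX' pY' ref m1 m2 final[unfolded e'_def e_def Cf_def Cc_def])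
qed

theorem proposition9p14:
  shows "\<exists>C2::real. C2 > 0 \<and>
    (\<forall>u \<tau> :: real. 0 < u \<and> u < 1 \<and> 0 < \<tau> \<and> \<tau> < 1 \<longrightarrow>
    (\<forall>(X::nat set) (Y::nat set) (Z::(nat \<times> nat) set) PX PY.
       finite X \<and> finite Y \<and> Z \<subseteq> X \<times> Y \<and> partition_on X PX \<and> partition_on Y PY \<and>
       rel_prob (\<Union>{px \<times> py | px py. px \<in> PX \<and> py \<in> PY \<and>
                   box_norm px py (\<lambda>x y. indicator Z (x, y) - rel_prob Z (px \<times> py)) \<ge> u})
                (X \<times> Y) \<ge> \<tau>
       \<longrightarrow>
       (\<exists>PX' PY'. partition_on X PX' \<and> partition_on Y PY' \<and>
          refines (prod_part PX' PY') (prod_part PX PY) \<and>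
          uexp (X \<times> Y) (\<lambda>z. (cond_exp Z (prod_part PX' PY') z)\<^sup>2)
            \<ge> uexp (X \<times> Y) (\<lambda>z. (cond_exp Z (prod_part PX PY) z)\<^sup>2) + \<tau> * u powr C2 \<and>
          multi PX' PX \<le> 2 ^ card PY \<and> multi PY' PY \<le> 2 ^ card PX)))"
proof (intro exI[of _ "8::real"] conjI allI impI)
  fix u \<tau> :: real and X Y :: "nat set" and Z :: "(nat \<times> nat) set" and PX PY
  assume a1: "0 < u \<and> u < 1 \<and> 0 < \<tau> \<and> \<tau> < 1"
  assume a2: "finite X \<and> finite Y \<and> Z \<subseteq> X \<times> Y \<and> partition_on X PX \<and> partition_on Y PY \<and>
       rel_prob (\<Union>{px \<times> py | px py. px \<in> PX \<and> py \<in> PY \<and>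
                   box_norm px py (\<lambda>x y. indicator Z (x, y) - rel_prob Z (px \<times> py)) \<ge> u})
                (X \<times> Y) \<ge> \<tau>"
  have p: "u powr (8::real) = u ^ 8" using a1 by (simp add: powr_realpow)
  show "\<exists>PX' PY'. partition_on X PX' \<and> partition_on Y PY' \<and>
          refines (prod_part PX' PY') (prod_part PX PY) \<and>
          uexp (X \<times> Y) (\<lambda>z. (cond_exp Z (prod_part PX' PY') z)\<^sup>2)
            \<ge> uexp (X \<times> Y) (\<lambda>z. (cond_exp Z (prod_part PX PY) z)\<^sup>2) + \<tau> * u powr 8 \<and>
          multi PX' PX \<le> 2 ^ card PY \<and> multi PY' PY \<le> 2 ^ card PX"
    unfolding p by (rule main_lemma) (use a1 a2 in blast)+
qed simp

end
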